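(* For every $\theta\in[0,\infty)$, the Beta distribution $\mathrm{Beta}(1,\theta)$ is the unique invariant distribution of the Feller process on $[0,1]$ generated by $A_\theta$, where $\mathrm{Beta}(1,0)$ is interpreted as the Dirac mass $\delta_1$.
   Context: $A_\theta h(z)=z(1-z)h''(z)+(2-(2+\theta)z)h'(z)+\theta(h(0)-h(z))$ for $h\in C^2([0,1])$; it describes a diffusion on $[0,1]$ with additional jumps to $0$ at rate $\theta$. $\mathrm{Beta}(1,\theta)$ for $\theta>0$ has density $\theta(1-z)^{\theta-1}$ on $[0,1]$. *)

theory Defs
  imports "HOL-Probability.Probability"
begin

text \<open>Functions on [0,1] are represented as real \<Rightarrow> real; only values on {0..1} matter.\<close>

definition sup_dist01 :: "(real \<Rightarrow> real) \<Rightarrow> (real \<Rightarrow> real) \<Rightarrow> real" where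
  "sup_dist01 f g = (SUP x\<in>{0..1}. \<bar>f x - g x\<bar>)"

definition C2_01 :: "(real \<Rightarrow> real) \<Rightarrow> (real \<Rightarrow> real) \<Rightarrow> (real \<Rightarrow> real) \<Rightarrow> bool" where
  "C2_01 h h1 h2 \<longleftrightarrow>
     continuous_on {0..1} h2 \<and>
     (\<forall>x\<in>{0..1}. (h has_real_derivative h1 x) (at x within {0..1})) \<and>
     (\<forall>x\<in>{0..1}. (h1 has_real_derivative h2 x) (at x within {0..1}))"

definition A_op :: "real \<Rightarrow> (real \<Rightarrow> real) \<Rightarrow> (real \<Rightarrow> real) \<Rightarrow> (real \<Rightarrow> real) \<Rightarrow> real \<Rightarrow> real" where
  "A_op \<theta> h h1 h2 z = z * (1 - z) * h2 z + (2 - (2 + \<theta>) * z) * h1 z + \<theta> * (h 0 - h z)"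

definition feller_semigroup01 :: "(real \<Rightarrow> (real \<Rightarrow> real) \<Rightarrow> (real \<Rightarrow> real)) \<Rightarrow> bool" where
  "feller_semigroup01 T \<longleftrightarrow>
     (\<forall>t\<ge>0. \<forall>f. continuous_on {0..1} f \<longrightarrow> continuous_on {0..1} (T t f)) \<and>
     (\<forall>f. \<forall>x\<in>{0..1}. T 0 f x = f x) \<and>
     (\<forall>s\<ge>0. \<forall>t\<ge>0. \<forall>f. continuous_on {0..1} f \<longrightarrow>
        (\<forall>x\<in>{0..1}. T (s + t) f x = T s (T t f) x)) \<and>
     (\<forall>t\<ge>0. \<forall>f g a b. continuous_on {0..1} f \<longrightarrow> continuous_on {0..1} g \<longrightarrow>
        (\<forall>x\<in>{0..1}. T t (\<lambda>y. a * f y + b * g y) x = a * T t f x + b * T t g x)) \<and>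
     (\<forall>t\<ge>0. \<forall>f. continuous_on {0..1} f \<longrightarrow> (\<forall>x\<in>{0..1}. f x \<ge> 0) \<longrightarrow>
        (\<forall>x\<in>{0..1}. T t f x \<ge> 0)) \<and>
     (\<forall>t\<ge>0. \<forall>x\<in>{0..1}. T t (\<lambda>_. 1) x = 1) \<and>
     (\<forall>f. continuous_on {0..1} f \<longrightarrow>
        ((\<lambda>t. sup_dist01 (T t f) f) \<longlongrightarrow> 0) (at_right 0))"

definition generated_by_A :: "real \<Rightarrow> (real \<Rightarrow> (real \<Rightarrow> real) \<Rightarrow> (real \<Rightarrow> real)) \<Rightarrow> bool" where
  "generated_by_A \<theta> T \<longleftrightarrow> feller_semigroup01 T \<and>
     (\<forall>h h1 h2. C2_01 h h1 h2 \<longrightarrow>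
        ((\<lambda>t. sup_dist01 (\<lambda>x. (T t h x - h x) / t) (A_op \<theta> h h1 h2)) \<longlongrightarrow> 0) (at_right 0))"

text \<open>Probability distributions on [0,1], viewed as Borel measures on the reals.\<close>
definition dist01 :: "real measure \<Rightarrow> bool" where
  "dist01 M \<longleftrightarrow> prob_space M \<and> sets M = sets borel \<and> emeasure M {0..1} = 1"

definition invariant_dist :: "(real \<Rightarrow> (real \<Rightarrow> real) \<Rightarrow> (real \<Rightarrow> real)) \<Rightarrow> real measure \<Rightarrow> bool" where
  "invariant_dist T M \<longleftrightarrow> dist01 M \<and>
     (\<forall>t\<ge>0. \<forall>f. continuous_on {0..1} f \<longrightarrow>
        (LINT x:{0..1}|M. T t f x) = (LINT x:{0..1}|M. f x))"

definition beta1 :: "real \<Rightarrow> real measure" where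
  "beta1 \<theta> = (if \<theta> = 0 then return borel 1
     else density lborel (\<lambda>z. ennreal (indicator {0..1} z * (\<theta> * (1 - z) powr (\<theta> - 1)))))"

end

theory Submission
  imports Defs
begin

lemma cont_bounded01:
  fixes f :: "real \<Rightarrow> real"
  assumes "continuous_on {0..1::real} f"
  shows "\<exists>B. \<forall>x\<in>{0..1}. \<bar>f x\<bar> \<le> B"
proof -
  have "compact (f ` {0..1})" using assms compact_continuous_image by blast
  then obtain B where "\<forall>y\<in>f ` {0..1}. norm y \<le> B"
    using compact_imp_bounded bounded_iff by metis
  then show ?thesis by auto
qed

lemma sup_dist01_ge:
  assumes "continuous_on {0..1} f" "continuous_on {0..1} g" "x \<in> {0..1}"
  shows "\<bar>f x - g x\<bar> \<le> sup_dist01 f g"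
proof -
  have "continuous_on {0..1} (\<lambda>x. \<bar>f x - g x\<bar>)"
    using assms by (intro continuous_intros)
  then obtain B where "\<forall>x\<in>{0..1}. \<bar>\<bar>f x - g x\<bar>\<bar> \<le> B" using cont_bounded01 by blast
  then have "bdd_above ((\<lambda>x. \<bar>f x - g x\<bar>) ` {0..1})" by (auto intro!: bdd_aboveI2)
  then show ?thesis unfolding sup_dist01_def using assms(3) by (rule cSUP_upper2) auto
qed


lemma dist01_prob: "dist01 M \<Longrightarrow> prob_space M" unfolding dist01_def by (rule conjunct1)

lemma set_int01:
  fixes f :: "real \<Rightarrow> real"
  assumes M: "dist01 M" and f: "continuous_on {0..1} f"
  shows "set_integrable M {0..1::real} f"
proof -
  interpret prob_space M using M dist01_prob by blast
  have sM: "sets M = sets borel" using M unfolding dist01_def by auto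
  have m: "(\<lambda>x. indicator {0..1::real} x *\<^sub>R f x) \<in> borel_measurable borel"
    using borel_measurable_continuous_on_indicator[OF _ f] by simp
  then have m': "(\<lambda>x. indicator {0..1::real} x *\<^sub>R f x) \<in> borel_measurable M"
    using measurable_cong_sets[OF sM refl] by blast
  obtain B where B: "\<forall>x\<in>{0..1}. \<bar>f x\<bar> \<le> B" using cont_bounded01[OF f] by blast
  have "\<bar>f 0\<bar> \<le> B" using B by simp
  then have B0: "B \<ge> 0" by linarith
  have "\<forall>x. norm (indicator {0..1::real} x *\<^sub>R f x) \<le> B"
  proof
    fix x :: real
    show "norm (indicator {0..1::real} x *\<^sub>R f x) \<le> B"
      using B B0 by (cases "x \<in> {0..1}") auto
  qed
  then show ?thesis unfolding set_integrable_def
    by (intro integrable_const_bound[OF _ m']) auto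
qed

lemma int_bound01:
  fixes f :: "real \<Rightarrow> real"
  assumes M: "dist01 M" and f: "continuous_on {0..1} f" and B: "\<forall>x\<in>{0..1}. \<bar>f x\<bar> \<le> B"
  shows "\<bar>LINT x:{0..1::real}|M. f x\<bar> \<le> B"
proof -
  interpret prob_space M using M dist01_prob by blast
  have "\<bar>f 0\<bar> \<le> B" using B by simp
  then have B0: "B \<ge> 0" by linarith
  have "\<bar>LINT x:{0..1::real}|M. f x\<bar> = \<bar>integral\<^sup>L M (\<lambda>x. indicator {0..1::real} x *\<^sub>R f x)\<bar>"
    unfolding set_lebesgue_integral_def by simp
  also have "\<dots> \<le> integral\<^sup>L M (\<lambda>x. \<bar>indicator {0..1::real} x *\<^sub>R f x\<bar>)"
    by (rule integral_abs_bound)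
  also have "\<dots> \<le> integral\<^sup>L M (\<lambda>x. B)"
    using set_int01[OF M f] B B0 unfolding set_integrable_def
    by (intro integral_mono) (auto simp: indicator_def)
  also have "\<dots> = B" by (simp add: prob_space.prob_space[OF dist01_prob[OF M]])
  finally show ?thesis .
qed

lemma int_lin3:
  fixes f1 f2 f3 :: "real \<Rightarrow> real" and a b c :: real
  assumes M: "dist01 M" and f1: "continuous_on {0..1} f1" and f2: "continuous_on {0..1} f2"
    and f3: "continuous_on {0..1} f3"
  shows "(LINT x:{0..1::real}|M. a * f1 x + b * f2 x + c * f3 x) =
     a * (LINT x:{0..1}|M. f1 x) + b * (LINT x:{0..1}|M. f2 x) + c * (LINT x:{0..1}|M. f3 x)"
proof -
  have c: "continuous_on {0..1} (\<lambda>x. a * f1 x)" "continuous_on {0..1} (\<lambda>x. b * f2 x)"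
     "continuous_on {0..1} (\<lambda>x. c * f3 x)" "continuous_on {0..1} (\<lambda>x. a * f1 x + b * f2 x)"
    using f1 f2 f3 by (auto intro!: continuous_intros)
  have "(LINT x:{0..1::real}|M. a * f1 x + b * f2 x + c * f3 x) =
     (LINT x:{0..1::real}|M. a * f1 x + b * f2 x) + (LINT x:{0..1::real}|M. c * f3 x)"
    by (rule set_integral_add(2)[OF set_int01[OF M c(4)] set_int01[OF M c(3)]])
  also have "(LINT x:{0..1::real}|M. a * f1 x + b * f2 x) =
     (LINT x:{0..1::real}|M. a * f1 x) + (LINT x:{0..1::real}|M. b * f2 x)"
    by (rule set_integral_add(2)[OF set_int01[OF M c(1)] set_int01[OF M c(2)]])
  finally show ?thesis by simp
qed

lemma int_cong01:
  assumes "\<And>x. x \<in> {0..1::real} \<Longrightarrow> f x = g x"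
  shows "(LINT x:{0..1}|M. f x) = (LINT x:{0..1}|M. g x)"
  unfolding set_lebesgue_integral_def
  by (rule Bochner_Integration.integral_cong) (auto simp: indicator_def assms)

lemma int_one01: "dist01 M \<Longrightarrow> (LINT x:{0..1::real}|M. 1) = (1::real)"
proof -
  assume M: "dist01 M"
  have "(LINT x:{0..1::real}|M. 1) = measure M {0..1}"
    unfolding set_lebesgue_integral_def using M unfolding dist01_def
    by (simp add: sets_eq_imp_space_eq[of M borel])
  also have "measure M {0..1} = 1" using M unfolding dist01_def measure_def by simp
  finally show ?thesis .
qed

lemma tend_right:
  assumes "((f::real\<Rightarrow>real) \<longlongrightarrow> 0) (at_right 0)" "e > 0"
  shows "\<exists>b>0. \<forall>s>0. s < b \<longrightarrow> \<bar>f s\<bar> < e"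
  using assms unfolding tendsto_iff eventually_at_right_field dist_real_def by force

context
  fixes T :: "real \<Rightarrow> (real \<Rightarrow> real) \<Rightarrow> (real \<Rightarrow> real)"
  assumes F: "feller_semigroup01 T"
begin

lemma T_cont: "t \<ge> 0 \<Longrightarrow> continuous_on {0..1} f \<Longrightarrow> continuous_on {0..1} (T t f)"
  using F[unfolded feller_semigroup01_def, THEN conjunct1] by blast

lemma T_zero: "x \<in> {0..1} \<Longrightarrow> T 0 f x = f x"
  using F[unfolded feller_semigroup01_def, THEN conjunct2, THEN conjunct1] by blast

lemma T_semi: "s \<ge> 0 \<Longrightarrow> t \<ge> 0 \<Longrightarrow> continuous_on {0..1} f \<Longrightarrow> x \<in> {0..1} \<Longrightarrow>
   T (s + t) f x = T s (T t f) x"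
  using F[unfolded feller_semigroup01_def, THEN conjunct2, THEN conjunct2, THEN conjunct1] by blast

lemma T_lin: "t \<ge> 0 \<Longrightarrow> continuous_on {0..1} f \<Longrightarrow> continuous_on {0..1} g \<Longrightarrow> x \<in> {0..1} \<Longrightarrow>
   T t (\<lambda>y. a * f y + b * g y) x = a * T t f x + b * T t g x"
  using F[unfolded feller_semigroup01_def, THEN conjunct2, THEN conjunct2, THEN conjunct2, THEN conjunct1] by blast

lemma T_pos: "t \<ge> 0 \<Longrightarrow> continuous_on {0..1} f \<Longrightarrow> (\<forall>x\<in>{0..1}. f x \<ge> 0) \<Longrightarrow> x \<in> {0..1} \<Longrightarrow>
   T t f x \<ge> 0"
  using F[unfolded feller_semigroup01_def, THEN conjunct2, THEN conjunct2, THEN conjunct2, THEN conjunct2, THEN conjunct1] by blast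

lemma T_one: "t \<ge> 0 \<Longrightarrow> x \<in> {0..1} \<Longrightarrow> T t (\<lambda>_. 1) x = 1"
  using F[unfolded feller_semigroup01_def, THEN conjunct2, THEN conjunct2, THEN conjunct2, THEN conjunct2, THEN conjunct2, THEN conjunct1] by blast

lemma T_strong: "continuous_on {0..1} f \<Longrightarrow> ((\<lambda>t. sup_dist01 (T t f) f) \<longlongrightarrow> 0) (at_right 0)"
  using F[unfolded feller_semigroup01_def, THEN conjunct2, THEN conjunct2, THEN conjunct2, THEN conjunct2, THEN conjunct2, THEN conjunct2] by blast

lemma T_contr:
  assumes t: "t \<ge> 0" and f: "continuous_on {0..1} f" and x: "x \<in> {0..1}"
    and B: "\<forall>y\<in>{0..1}. \<bar>f y\<bar> \<le> B"
  shows "\<bar>T t f x\<bar> \<le> B"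
proof -
  have c1: "continuous_on {0..1} (\<lambda>_::real. 1::real)" by simp
  have l1: "T t (\<lambda>y. B * 1 + (-1) * f y) x = B * T t (\<lambda>_. 1) x + (-1) * T t f x"
    using T_lin[OF t c1 f x, of B "-1"] by simp
  have l2: "T t (\<lambda>y. B * 1 + 1 * f y) x = B * T t (\<lambda>_. 1) x + 1 * T t f x"
    using T_lin[OF t c1 f x, of B "1"] by simp
  have p1: "T t (\<lambda>y. B * 1 + (-1) * f y) x \<ge> 0"
    by (rule T_pos[OF t _ _ x]) (use f B in \<open>auto intro!: continuous_intros\<close>)
  have p2: "T t (\<lambda>y. B * 1 + 1 * f y) x \<ge> 0"
    by (rule T_pos[OF t _ _ x]) (use f B in \<open>auto intro!: continuous_intros\<close>)
  show ?thesis using l1 l2 p1 p2 T_one[OF t x] by auto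
qed


lemma T_lin3:
  assumes t: "t \<ge> 0" and f1: "continuous_on {0..1} f1" and f2: "continuous_on {0..1} f2"
    and f3: "continuous_on {0..1} f3" and x: "x \<in> {0..1}"
  shows "T t (\<lambda>y. a * f1 y + b * f2 y + c * f3 y) x = a * T t f1 x + b * T t f2 x + c * T t f3 x"
proof -
  have c12: "continuous_on {0..1} (\<lambda>y. a * f1 y + b * f2 y)"
    using f1 f2 by (auto intro!: continuous_intros)
  have "T t (\<lambda>y. a * f1 y + b * f2 y + c * f3 y) x = T t (\<lambda>y. 1 * (a * f1 y + b * f2 y) + c * f3 y) x"
    by simp
  also have "\<dots> = 1 * T t (\<lambda>y. a * f1 y + b * f2 y) x + c * T t f3 x"
    by (rule T_lin[OF t c12 f3 x])
  also have "T t (\<lambda>y. a * f1 y + b * f2 y) x = a * T t f1 x + b * T t f2 x"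
    by (rule T_lin[OF t f1 f2 x])
  finally show ?thesis by simp
qed

lemma phi_deriv:
  assumes M: "dist01 M" and h: "continuous_on {0..1} h" and g: "continuous_on {0..1} g"
    and gen: "((\<lambda>s. sup_dist01 (\<lambda>x. (T s h x - h x) / s) g) \<longlongrightarrow> 0) (at_right 0)"
    and t: "t \<ge> 0"
  shows "((\<lambda>u. LINT x:{0..1}|M. T u h x) has_real_derivative (LINT x:{0..1}|M. T t g x))
           (at t within {0..})"
proof -
  define \<phi> where "\<phi> u = (LINT x:{0..1}|M. T u h x)" for u
  define L where "L = (LINT x:{0..1}|M. T t g x)"
  have key: "\<forall>e>0. \<exists>d>0. \<forall>y\<in>{0..}. y \<noteq> t \<and> dist y t < d \<longrightarrow> dist ((\<phi> y - \<phi> t) / (y - t)) L < e"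
  proof (intro allI impI)
    fix e :: real assume e: "e > 0"
    have e2: "e/2 > 0" using e by simp
    obtain b1 where b1: "b1 > 0" "\<forall>s>0. s < b1 \<longrightarrow> \<bar>sup_dist01 (\<lambda>x. (T s h x - h x) / s) g\<bar> < e/2"
      using tend_right[OF gen e2] by blast
    obtain b2 where b2: "b2 > 0" "\<forall>s>0. s < b2 \<longrightarrow> \<bar>sup_dist01 (T s g) g\<bar> < e/2"
      using tend_right[OF T_strong[OF g] e2] by blast
    show "\<exists>d>0. \<forall>y\<in>{0..}. y \<noteq> t \<and> dist y t < d \<longrightarrow> dist ((\<phi> y - \<phi> t) / (y - t)) L < e"
    proof (intro exI[of _ "min b1 b2"] conjI ballI impI)
      show "min b1 b2 > 0" using b1 b2 by simp
      fix y :: real assume y: "y \<in> {0..}" and yt: "y \<noteq> t \<and> dist y t < min b1 b2"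
      show "dist ((\<phi> y - \<phi> t) / (y - t)) L < e"
      proof (cases "y > t")
        case True
        define s where "s = y - t"
        have s: "s > 0" "s < b1" using True yt by (auto simp: s_def dist_real_def)
        define \<sigma> where "\<sigma> = sup_dist01 (\<lambda>x. (T s h x - h x) / s) g"
        have sig: "\<sigma> < e/2" using b1(2)[rule_format, OF s(1) s(2)] unfolding \<sigma>_def by linarith
        have Tsh: "continuous_on {0..1} (T s h)" using T_cont s h by auto
        have cq: "continuous_on {0..1} (\<lambda>x. (T s h x - h x) / s)"
          using Tsh h s(1) by (intro continuous_intros) auto
        define D where "D z = (1/s) * T s h z + (-1/s) * h z + (-1) * g z" for z
        have Dc: "continuous_on {0..1} D" unfolding D_def using Tsh h g by (intro continuous_intros)
        have Db: "\<forall>z\<in>{0..1}. \<bar>D z\<bar> \<le> \<sigma>"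
        proof
          fix z :: real assume z: "z \<in> {0..1}"
          have "D z = (T s h z - h z) / s - g z" unfolding D_def using s by (simp add: field_simps)
          then show "\<bar>D z\<bar> \<le> \<sigma>" unfolding \<sigma>_def using sup_dist01_ge[OF cq g z] by simp
        qed
        have pt: "T t D x = (1/s) * T y h x + (-1/s) * T t h x + (-1) * T t g x" if x: "x \<in> {0..1}" for x
        proof -
          have "T t D x = (1/s) * T t (T s h) x + (-1/s) * T t h x + (-1) * T t g x"
            unfolding D_def by (rule T_lin3[OF t Tsh h g x])
          moreover have "T t (T s h) x = T y h x"
            using T_semi[OF t _ h x, of s] s by (simp add: s_def)
          ultimately show ?thesis by simp
        qed
        have cy: "continuous_on {0..1} (T y h)" "continuous_on {0..1} (T t h)" "continuous_on {0..1} (T t g)"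
          using T_cont y t h g by auto
        have "(LINT x:{0..1}|M. T t D x) = (LINT x:{0..1}|M. (1/s) * T y h x + (-1/s) * T t h x + (-1) * T t g x)"
          by (rule int_cong01) (use pt in auto)
        also have "\<dots> = (1/s) * \<phi> y + (-1/s) * \<phi> t + (-1) * L"
          unfolding \<phi>_def L_def by (rule int_lin3[OF M cy])
        finally have eq: "(LINT x:{0..1}|M. T t D x) = (\<phi> y - \<phi> t) / (y - t) - L"
          using s by (simp add: s_def field_simps)
        have "\<bar>LINT x:{0..1}|M. T t D x\<bar> \<le> \<sigma>"
          by (rule int_bound01[OF M T_cont[OF t Dc]]) (use T_contr[OF t Dc _ Db] in auto)
        then show ?thesis using eq sig e by (simp add: dist_real_def)
      next
        case False
        then have ylt: "y < t" using yt by auto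
        define r where "r = t - y"
        have r: "r > 0" "r < b1" "r < b2" using ylt yt by (auto simp: r_def dist_real_def)
        have y0: "y \<ge> 0" using y by auto
        define \<sigma> where "\<sigma> = sup_dist01 (\<lambda>x. (T r h x - h x) / r) g"
        have sig: "\<sigma> < e/2" using b1(2)[rule_format, OF r(1) r(2)] unfolding \<sigma>_def by linarith
        define \<rho> where "\<rho> = sup_dist01 (T r g) g"
        have rho: "\<rho> < e/2" using b2(2)[rule_format, OF r(1) r(3)] unfolding \<rho>_def by linarith
        have Trh: "continuous_on {0..1} (T r h)" using T_cont r h by auto
        have Trg: "continuous_on {0..1} (T r g)" using T_cont r g by auto
        have cq: "continuous_on {0..1} (\<lambda>x. (T r h x - h x) / r)"
          using Trh h r(1) by (intro continuous_intros) auto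
        define D where "D z = (1/r) * T r h z + (-1/r) * h z + (-1) * T r g z" for z
        have Dc: "continuous_on {0..1} D" unfolding D_def using Trh h Trg by (intro continuous_intros)
        have Db: "\<forall>z\<in>{0..1}. \<bar>D z\<bar> \<le> \<sigma> + \<rho>"
        proof
          fix z :: real assume z: "z \<in> {0..1}"
          have "D z = ((T r h z - h z) / r - g z) - (T r g z - g z)" unfolding D_def using r by (simp add: field_simps)
          then show "\<bar>D z\<bar> \<le> \<sigma> + \<rho>" unfolding \<sigma>_def \<rho>_def
            using sup_dist01_ge[OF cq g z] sup_dist01_ge[OF Trg g z] by linarith
        qed
        have pt: "T y D x = (1/r) * T t h x + (-1/r) * T y h x + (-1) * T t g x" if x: "x \<in> {0..1}" for x
        proof -
          have "T y D x = (1/r) * T y (T r h) x + (-1/r) * T y h x + (-1) * T y (T r g) x"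
            unfolding D_def by (rule T_lin3[OF y0 Trh h Trg x])
          moreover have "T y (T r h) x = T t h x"
            using T_semi[OF y0 _ h x, of r] r by (simp add: r_def)
          moreover have "T y (T r g) x = T t g x"
            using T_semi[OF y0 _ g x, of r] r by (simp add: r_def)
          ultimately show ?thesis by simp
        qed
        have cy: "continuous_on {0..1} (T t h)" "continuous_on {0..1} (T y h)" "continuous_on {0..1} (T t g)"
          using T_cont y0 t h g by auto
        have "(LINT x:{0..1}|M. T y D x) = (LINT x:{0..1}|M. (1/r) * T t h x + (-1/r) * T y h x + (-1) * T t g x)"
          by (rule int_cong01) (use pt in auto)
        also have "\<dots> = (1/r) * \<phi> t + (-1/r) * \<phi> y + (-1) * L"
          unfolding \<phi>_def L_def by (rule int_lin3[OF M cy])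
        finally have eq: "(LINT x:{0..1}|M. T y D x) = (\<phi> y - \<phi> t) / (y - t) - L"
          using r by (simp add: r_def field_simps)
        have "\<bar>LINT x:{0..1}|M. T y D x\<bar> \<le> \<sigma> + \<rho>"
          by (rule int_bound01[OF M T_cont[OF y0 Dc]]) (use T_contr[OF y0 Dc _ Db] in auto)
        then show ?thesis using eq sig rho e by (simp add: dist_real_def)
      qed
    qed
  qed
  have "(\<phi> has_real_derivative L) (at t within {0..})"
    unfolding has_field_derivative_iff tendsto_iff eventually_at using key by blast
  then show ?thesis unfolding \<phi>_def[abs_def] L_def .
qed

end


definition mom :: "real measure \<Rightarrow> nat \<Rightarrow> real" where
  "mom M n = (LINT x:{0..1}|M. x ^ n)"

definition gA :: "real \<Rightarrow> nat \<Rightarrow> real \<Rightarrow> real" where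
  "gA \<theta> n z = (real n + 1) * real n * z ^ (n - 1) + (- (real n + 1) * (real n + \<theta>)) * z ^ n"

lemma mono_C2: "C2_01 (\<lambda>z. z ^ n) (\<lambda>z. real n * z ^ (n - Suc 0))
   (\<lambda>z. real n * (real (n - Suc 0) * z ^ (n - Suc 0 - Suc 0)))"
  unfolding C2_01_def
proof (intro conjI ballI)
  show "continuous_on {0..1} (\<lambda>z. real n * (real (n - Suc 0) * z ^ (n - Suc 0 - Suc 0)))"
    by (intro continuous_intros)
  fix x :: real
  show "((\<lambda>z. z ^ n) has_real_derivative real n * x ^ (n - Suc 0)) (at x within {0..1})"
    by (rule DERIV_pow)
  show "((\<lambda>z. real n * z ^ (n - Suc 0)) has_real_derivative
          real n * (real (n - Suc 0) * x ^ (n - Suc 0 - Suc 0))) (at x within {0..1})"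
    by (intro DERIV_cmult DERIV_pow)
qed

lemma mono_A:
  assumes n: "n \<ge> 1"
  shows "A_op \<theta> (\<lambda>z. z ^ n) (\<lambda>z. real n * z ^ (n - Suc 0))
   (\<lambda>z. real n * (real (n - Suc 0) * z ^ (n - Suc 0 - Suc 0))) = gA \<theta> n"
proof (rule ext)
  fix z :: real
  obtain m where m: "n = Suc m" using n by (cases n) auto
  show "A_op \<theta> (\<lambda>z. z ^ n) (\<lambda>z. real n * z ^ (n - Suc 0))
     (\<lambda>z. real n * (real (n - Suc 0) * z ^ (n - Suc 0 - Suc 0))) z = gA \<theta> n z"
  proof (cases m)
    case 0
    then show ?thesis using m by (simp add: A_op_def gA_def algebra_simps)
  next
    case (Suc k)
    then show ?thesis using m by (simp add: A_op_def gA_def algebra_simps power_Suc)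
  qed
qed

lemma ode_zero:
  fixes \<psi> :: "real \<Rightarrow> real"
  assumes d: "\<And>t. t \<ge> 0 \<Longrightarrow> (\<psi> has_real_derivative (- c) * \<psi> t) (at t within {0..})"
    and z: "\<psi> 0 = 0" and t: "t \<ge> 0"
  shows "\<psi> t = 0"
proof -
  have "\<exists>k. \<forall>x\<in>{0..}. exp (c * x) * \<psi> x = k"
  proof (rule has_field_derivative_zero_constant)
    show "convex {0::real..}" by (rule convex_real_interval)
    fix x :: real assume x: "x \<in> {0..}"
    have "((\<lambda>x. exp (c * x) * \<psi> x) has_real_derivative
        (exp (c * x) * c) * \<psi> x + exp (c * x) * ((- c) * \<psi> x)) (at x within {0..})"
    proof -
      have e: "((\<lambda>x. exp (c * x)) has_real_derivative exp (c * x) * c) (at x within {0..})"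
        by (auto intro!: derivative_eq_intros)
      show ?thesis using DERIV_mult[OF e d[of x]] x by simp
    qed
    then show "((\<lambda>x. exp (c * x) * \<psi> x) has_real_derivative 0) (at x within {0..})"
      by (simp add: algebra_simps)
  qed
  then obtain k where k: "\<forall>x\<in>{0..}. exp (c * x) * \<psi> x = k" by blast
  have "k = 0" using k[rule_format, of 0] z by simp
  then show ?thesis using k[rule_format, of t] t by simp
qed


lemma G_F: "generated_by_A \<theta> T \<Longrightarrow> feller_semigroup01 T"
  unfolding generated_by_A_def by (rule conjunct1)

lemma cont_pow: "continuous_on {0..1::real} (\<lambda>z. z ^ n)"
  by (intro continuous_intros)

lemma cont_gA: "continuous_on {0..1::real} (gA \<theta> n)"
  unfolding gA_def by (intro continuous_intros)

lemma gA_Suc: "gA \<theta> (Suc m) = (\<lambda>z. ((real (Suc m) + 1) * real (Suc m)) * z ^ m +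
    (- (real (Suc m) + 1) * (real (Suc m) + \<theta>)) * z ^ Suc m)"
  unfolding gA_def by (rule ext) simp

lemma gen_mono:
  assumes G: "generated_by_A \<theta> T" and n: "n \<ge> 1"
  shows "((\<lambda>s. sup_dist01 (\<lambda>x. (T s (\<lambda>z. z ^ n) x - x ^ n) / s) (gA \<theta> n)) \<longlongrightarrow> 0) (at_right 0)"
proof -
  have "\<forall>h h1 h2. C2_01 h h1 h2 \<longrightarrow>
        ((\<lambda>t. sup_dist01 (\<lambda>x. (T t h x - h x) / t) (A_op \<theta> h h1 h2)) \<longlongrightarrow> 0) (at_right 0)"
    using G unfolding generated_by_A_def by (rule conjunct2)
  from this[rule_format, OF mono_C2[of n]] show ?thesis unfolding mono_A[OF n] by simp
qed

lemma int_lin2: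
  fixes f1 f2 :: "real \<Rightarrow> real" and a b :: real
  assumes M: "dist01 M" and f1: "continuous_on {0..1} f1" and f2: "continuous_on {0..1} f2"
  shows "(LINT x:{0..1::real}|M. a * f1 x + b * f2 x) =
     a * (LINT x:{0..1}|M. f1 x) + b * (LINT x:{0..1}|M. f2 x)"
  using int_lin3[OF M f1 f2 f2, of a b 0] by simp

lemma inv_mono:
  assumes G: "generated_by_A \<theta> T" and M: "dist01 M"
    and rec: "\<And>n. n \<ge> 1 \<Longrightarrow> (real n + \<theta>) * mom M n = real n * mom M (n - 1)"
  shows "t \<ge> 0 \<Longrightarrow> (LINT x:{0..1}|M. T t (\<lambda>z. z ^ n) x) = mom M n"
proof (induction n arbitrary: t)
  case 0
  have F: "feller_semigroup01 T" using G_F[OF G] .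
  have "(LINT x:{0..1}|M. T t (\<lambda>z. z ^ 0) x) = (LINT x:{0..1}|M. 1)"
    by (rule int_cong01) (simp add: T_one[OF F 0])
  then show ?case using int_one01[OF M] by (simp add: mom_def)
next
  case (Suc m)
  have F: "feller_semigroup01 T" using G_F[OF G] .
  define c where "c = (real (Suc m) + 1) * (real (Suc m) + \<theta>)"
  define a where "a = (real (Suc m) + 1) * real (Suc m)"
  define \<phi> where "\<phi> u = (LINT x:{0..1}|M. T u (\<lambda>z. z ^ Suc m) x)" for u
  define \<psi> where "\<psi> u = \<phi> u - mom M (Suc m)" for u
  have hr: "real (Suc m) * mom M m = (real (Suc m) + \<theta>) * mom M (Suc m)"
    using rec[of "Suc m"] by simp
  have "a * mom M m = (real (Suc m) + 1) * (real (Suc m) * mom M m)"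
    unfolding a_def by (simp only: mult.assoc)
  also have "\<dots> = (real (Suc m) + 1) * ((real (Suc m) + \<theta>) * mom M (Suc m))"
    by (simp only: hr)
  also have "\<dots> = c * mom M (Suc m)" unfolding c_def by (simp only: mult.assoc)
  finally have r: "a * mom M m = c * mom M (Suc m)" .
  have "\<psi> t = 0"
  proof (rule ode_zero[where c = c and \<psi> = \<psi> and t = t])
    fix u :: real assume u: "u \<ge> 0"
    have d: "(\<phi> has_real_derivative (LINT x:{0..1}|M. T u (gA \<theta> (Suc m)) x)) (at u within {0..})"
      unfolding \<phi>_def[abs_def]
      by (rule phi_deriv[OF F M cont_pow cont_gA gen_mono[OF G] u]) simp
    have "(LINT x:{0..1}|M. T u (gA \<theta> (Suc m)) x) =
        (LINT x:{0..1}|M. a * T u (\<lambda>z. z ^ m) x + (- c) * T u (\<lambda>z. z ^ Suc m) x)"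
    proof (rule int_cong01)
      fix x :: real assume x: "x \<in> {0..1}"
      have gg: "gA \<theta> (Suc m) = (\<lambda>z. a * z ^ m + (- c) * z ^ Suc m)"
        unfolding gA_Suc a_def c_def by (rule ext) (simp add: algebra_simps)
      show "T u (gA \<theta> (Suc m)) x = a * T u (\<lambda>z. z ^ m) x + (- c) * T u (\<lambda>z. z ^ Suc m) x"
        unfolding gg by (rule T_lin[OF F u cont_pow cont_pow x])
    qed
    also have "\<dots> = a * (LINT x:{0..1}|M. T u (\<lambda>z. z ^ m) x) + (- c) * \<phi> u"
      unfolding \<phi>_def by (rule int_lin2[OF M T_cont[OF F u cont_pow] T_cont[OF F u cont_pow]])
    also have "\<dots> = (- c) * \<psi> u"
      using Suc.IH[OF u] r unfolding \<psi>_def by (simp add: algebra_simps)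
    finally have eq: "(LINT x:{0..1}|M. T u (gA \<theta> (Suc m)) x) = (- c) * \<psi> u" .
    have dd: "((\<lambda>u. \<phi> u - mom M (Suc m)) has_real_derivative
        (LINT x:{0..1}|M. T u (gA \<theta> (Suc m)) x) - 0) (at u within {0..})"
      by (rule DERIV_diff[OF d DERIV_const])
    have psi_eq: "(\<lambda>u. \<phi> u - mom M (Suc m)) = \<psi>" by (rule ext) (simp add: \<psi>_def)
    from dd have "(\<psi> has_real_derivative (LINT x:{0..1}|M. T u (gA \<theta> (Suc m)) x) - 0) (at u within {0..})"
      unfolding psi_eq .
    then show "(\<psi> has_real_derivative (- c) * \<psi> u) (at u within {0..})"
      by (simp only: eq diff_zero)
  next
    have "\<phi> 0 = (LINT x:{0..1}|M. x ^ Suc m)"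
      unfolding \<phi>_def by (rule int_cong01) (simp add: T_zero[OF F])
    then show "\<psi> 0 = 0" unfolding \<psi>_def mom_def by simp
  next
    show "t \<ge> 0" by fact
  qed
  then show ?case unfolding \<psi>_def \<phi>_def by simp
qed


lemma T_poly:
  assumes F: "feller_semigroup01 T" and t: "t \<ge> 0" and x: "x \<in> {0..1}"
  shows "T t (\<lambda>z. \<Sum>i\<le>N. a i * z ^ i) x = (\<Sum>i\<le>N. a i * T t (\<lambda>z. z ^ i) x)"
proof (induction N)
  case 0
  have e: "(\<lambda>z::real. \<Sum>i\<le>0. a i * z ^ i) = (\<lambda>z. a 0 * z ^ 0 + 0 * z ^ 0)" by simp
  have "T t (\<lambda>z. a 0 * z ^ 0 + 0 * z ^ 0) x = a 0 * T t (\<lambda>z. z ^ 0) x + 0 * T t (\<lambda>z. z ^ 0) x"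
    by (rule T_lin[OF F t cont_pow cont_pow x])
  then show ?case unfolding e by simp
next
  case (Suc N)
  have c: "continuous_on {0..1} (\<lambda>z::real. \<Sum>i\<le>N. a i * z ^ i)" by (intro continuous_intros)
  have e: "(\<lambda>z::real. \<Sum>i\<le>Suc N. a i * z ^ i) = (\<lambda>z. 1 * (\<Sum>i\<le>N. a i * z ^ i) + a (Suc N) * z ^ Suc N)"
    by simp
  have "T t (\<lambda>z. 1 * (\<Sum>i\<le>N. a i * z ^ i) + a (Suc N) * z ^ Suc N) x =
     1 * T t (\<lambda>z. \<Sum>i\<le>N. a i * z ^ i) x + a (Suc N) * T t (\<lambda>z. z ^ Suc N) x"
    by (rule T_lin[OF F t c cont_pow x])
  then show ?case unfolding e using Suc.IH by simp
qed

lemma int_sum: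
  fixes f :: "nat \<Rightarrow> real \<Rightarrow> real"
  assumes M: "dist01 M" and c: "\<And>i. continuous_on {0..1} (f i)"
  shows "(LINT x:{0..1}|M. (\<Sum>i\<le>N. a i * f i x)) = (\<Sum>i\<le>N. a i * (LINT x:{0..1}|M. f i x))"
proof (induction N)
  case 0
  have "(LINT x:{0..1}|M. a 0 * f 0 x + 0 * f 0 x) = a 0 * (LINT x:{0..1}|M. f 0 x) + 0 * (LINT x:{0..1}|M. f 0 x)"
    by (rule int_lin2[OF M c c])
  then show ?case by simp
next
  case (Suc N)
  have cs: "continuous_on {0..1} (\<lambda>x. \<Sum>i\<le>N. a i * f i x)" using c by (intro continuous_intros)
  have "(LINT x:{0..1}|M. 1 * (\<Sum>i\<le>N. a i * f i x) + a (Suc N) * f (Suc N) x) =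
     1 * (LINT x:{0..1}|M. (\<Sum>i\<le>N. a i * f i x)) + a (Suc N) * (LINT x:{0..1}|M. f (Suc N) x)"
    by (rule int_lin2[OF M cs c])
  then show ?case using Suc.IH by simp
qed

lemma eq_by_eps:
  fixes a b :: real
  assumes "\<And>e. e > 0 \<Longrightarrow> \<bar>a - b\<bar> \<le> 2 * e"
  shows "a = b"
proof (rule ccontr)
  assume "a \<noteq> b"
  then have "\<bar>a - b\<bar> / 4 > 0" by simp
  from assms[OF this] show False using \<open>a \<noteq> b\<close> by simp
qed

lemma inv_cont:
  assumes G: "generated_by_A \<theta> T" and M: "dist01 M"
    and rec: "\<And>n. n \<ge> 1 \<Longrightarrow> (real n + \<theta>) * mom M n = real n * mom M (n - 1)"
    and t: "t \<ge> 0" and f: "continuous_on {0..1} f"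
  shows "(LINT x:{0..1}|M. T t f x) = (LINT x:{0..1}|M. f x)"
proof (rule eq_by_eps)
  fix e :: real assume e: "e > 0"
  have F: "feller_semigroup01 T" using G_F[OF G] .
  obtain g where g: "real_polynomial_function g" "\<And>x. x \<in> {0..1} \<Longrightarrow> \<bar>f x - g x\<bar> < e"
    using Stone_Weierstrass_real_polynomial_function[OF compact_Icc f e] by blast
  obtain a N where gs: "g = (\<lambda>x. \<Sum>i\<le>N. a i * x ^ i)"
    using g(1) real_polynomial_function_iff_sum by blast
  have gc: "continuous_on {0..1} g" unfolding gs by (intro continuous_intros)
  have "(LINT x:{0..1}|M. T t g x) = (LINT x:{0..1}|M. (\<Sum>i\<le>N. a i * T t (\<lambda>z. z ^ i) x))"
    unfolding gs by (rule int_cong01) (rule T_poly[OF F t])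
  also have "\<dots> = (\<Sum>i\<le>N. a i * (LINT x:{0..1}|M. T t (\<lambda>z. z ^ i) x))"
    by (rule int_sum[OF M T_cont[OF F t cont_pow]])
  also have "\<dots> = (\<Sum>i\<le>N. a i * mom M i)"
    using inv_mono[OF G M rec t] by simp
  finally have e1: "(LINT x:{0..1}|M. T t g x) = (\<Sum>i\<le>N. a i * mom M i)" .
  have "(LINT x:{0..1}|M. g x) = (\<Sum>i\<le>N. a i * (LINT x:{0..1}|M. x ^ i))"
    unfolding gs by (rule int_sum[OF M cont_pow])
  then have e2: "(LINT x:{0..1}|M. g x) = (\<Sum>i\<le>N. a i * mom M i)" by (simp add: mom_def)
  have fgb: "\<forall>y\<in>{0..1}. \<bar>1 * f y + (-1) * g y\<bar> \<le> e" using g(2) by (simp add: less_imp_le)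
  have fgc: "continuous_on {0..1} (\<lambda>y. 1 * f y + (-1) * g y)" using f gc by (intro continuous_intros)
  have "(LINT x:{0..1}|M. T t (\<lambda>y. 1 * f y + (-1) * g y) x) =
        (LINT x:{0..1}|M. 1 * T t f x + (-1) * T t g x)"
    by (rule int_cong01) (rule T_lin[OF F t f gc])
  also have "\<dots> = 1 * (LINT x:{0..1}|M. T t f x) + (-1) * (LINT x:{0..1}|M. T t g x)"
    by (rule int_lin2[OF M T_cont[OF F t f] T_cont[OF F t gc]])
  finally have d1: "(LINT x:{0..1}|M. T t (\<lambda>y. 1 * f y + (-1) * g y) x) =
     (LINT x:{0..1}|M. T t f x) - (LINT x:{0..1}|M. T t g x)" by simp
  have b1: "\<bar>LINT x:{0..1}|M. T t (\<lambda>y. 1 * f y + (-1) * g y) x\<bar> \<le> e"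
    by (rule int_bound01[OF M T_cont[OF F t fgc]]) (use T_contr[OF F t fgc _ fgb] in auto)
  have d2: "(LINT x:{0..1}|M. 1 * f x + (-1) * g x) = (LINT x:{0..1}|M. f x) - (LINT x:{0..1}|M. g x)"
    using int_lin2[OF M f gc, of 1 "-1"] by simp
  have b2: "\<bar>LINT x:{0..1}|M. 1 * f x + (-1) * g x\<bar> \<le> e"
    by (rule int_bound01[OF M fgc fgb])
  show "\<bar>(LINT x:{0..1}|M. T t f x) - (LINT x:{0..1}|M. f x)\<bar> \<le> 2 * e"
    using b1 b2 d1 d2 e1 e2 by linarith
qed

lemma rec_of_inv:
  assumes G: "generated_by_A \<theta> T" and I: "invariant_dist T M" and n: "n \<ge> 1"
  shows "(real n + \<theta>) * mom M n = real n * mom M (n - 1)"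
proof -
  have F: "feller_semigroup01 T" using G_F[OF G] .
  have M: "dist01 M" using I unfolding invariant_dist_def by blast
  have inv: "\<And>t f. t \<ge> 0 \<Longrightarrow> continuous_on {0..1} f \<Longrightarrow>
        (LINT x:{0..1}|M. T t f x) = (LINT x:{0..1}|M. f x)"
    using I unfolding invariant_dist_def by blast
  obtain m where m: "n = Suc m" using n by (cases n) auto
  define L where "L = (LINT x:{0..1}|M. gA \<theta> n x)"
  have L0: "\<bar>L\<bar> \<le> e" if e: "e > 0" for e
  proof -
    obtain b where b: "b > 0" "\<forall>s>0. s < b \<longrightarrow>
        \<bar>sup_dist01 (\<lambda>x. (T s (\<lambda>z. z ^ n) x - x ^ n) / s) (gA \<theta> n)\<bar> < e"
      using tend_right[OF gen_mono[OF G n] e] by blast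
    define s where "s = b / 2"
    have s: "s > 0" "s < b" using b(1) by (auto simp: s_def)
    define \<sigma> where "\<sigma> = sup_dist01 (\<lambda>x. (T s (\<lambda>z. z ^ n) x - x ^ n) / s) (gA \<theta> n)"
    have sig: "\<sigma> < e" using b(2)[rule_format, OF s] unfolding \<sigma>_def by linarith
    have Tc: "continuous_on {0..1} (T s (\<lambda>z. z ^ n))" using T_cont[OF F _ cont_pow] s by auto
    have cq: "continuous_on {0..1} (\<lambda>x. (T s (\<lambda>z. z ^ n) x - x ^ n) / s)"
      using Tc s(1) by (intro continuous_intros) auto
    define D where "D x = (1/s) * T s (\<lambda>z. z ^ n) x + (-1/s) * x ^ n + (-1) * gA \<theta> n x" for x
    have Dc: "continuous_on {0..1} D" unfolding D_def using Tc cont_gA by (intro continuous_intros)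
    have Db: "\<forall>z\<in>{0..1}. \<bar>D z\<bar> \<le> \<sigma>"
    proof
      fix z :: real assume z: "z \<in> {0..1}"
      have "D z = (T s (\<lambda>z. z ^ n) z - z ^ n) / s - gA \<theta> n z" unfolding D_def using s by (simp add: field_simps)
      then show "\<bar>D z\<bar> \<le> \<sigma>" unfolding \<sigma>_def using sup_dist01_ge[OF cq cont_gA z] by simp
    qed
    have "(LINT x:{0..1}|M. D x) = (1/s) * (LINT x:{0..1}|M. T s (\<lambda>z. z ^ n) x) +
        (-1/s) * (LINT x:{0..1}|M. x ^ n) + (-1) * L"
      unfolding D_def L_def by (rule int_lin3[OF M Tc cont_pow cont_gA])
    also have "(LINT x:{0..1}|M. T s (\<lambda>z. z ^ n) x) = (LINT x:{0..1}|M. x ^ n)"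
      using inv[OF _ cont_pow] s by simp
    finally have "(LINT x:{0..1}|M. D x) = - L" by simp
    moreover have "\<bar>LINT x:{0..1}|M. D x\<bar> \<le> \<sigma>" by (rule int_bound01[OF M Dc Db])
    ultimately show ?thesis using sig by simp
  qed
  have "L = 0"
  proof (rule ccontr)
    assume "L \<noteq> 0"
    then have "\<bar>L\<bar> / 2 > 0" by simp
    from L0[OF this] \<open>L \<noteq> 0\<close> show False by simp
  qed
  moreover have "L = ((real (Suc m) + 1) * real (Suc m)) * mom M m +
       (- (real (Suc m) + 1) * (real (Suc m) + \<theta>)) * mom M (Suc m)"
    unfolding L_def m gA_Suc mom_def by (rule int_lin2[OF M cont_pow cont_pow])
  ultimately have "(real (Suc m) + 1) * (real (Suc m) * mom M m) =
     (real (Suc m) + 1) * ((real (Suc m) + \<theta>) * mom M (Suc m))"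
    by (simp add: algebra_simps)
  then have "real (Suc m) * mom M m = (real (Suc m) + \<theta>) * mom M (Suc m)"
    by (metis mult_left_cancel of_nat_Suc of_nat_0_le_iff add_nonneg_pos zero_less_one less_irrefl)
  then show ?thesis using m by simp
qed

lemma mom0: "dist01 M \<Longrightarrow> mom M 0 = 1"
  unfolding mom_def using int_one01 by simp

lemma mom_eq:
  assumes th: "\<theta> \<ge> 0" and M: "dist01 M" and N: "dist01 N"
    and rM: "\<And>n. n \<ge> 1 \<Longrightarrow> (real n + \<theta>) * mom M n = real n * mom M (n - 1)"
    and rN: "\<And>n. n \<ge> 1 \<Longrightarrow> (real n + \<theta>) * mom N n = real n * mom N (n - 1)"
  shows "mom M n = mom N n"
proof (induction n)
  case 0
  then show ?case using mom0[OF M] mom0[OF N] by simp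
next
  case (Suc m)
  have p: "real (Suc m) + \<theta> \<noteq> 0" using th by simp
  have "(real (Suc m) + \<theta>) * mom M (Suc m) = (real (Suc m) + \<theta>) * mom N (Suc m)"
    using rM[of "Suc m"] rN[of "Suc m"] Suc.IH by simp
  then show ?case using p by simp
qed


lemma dist01_cont_eq:
  fixes f :: "real \<Rightarrow> real"
  assumes M: "dist01 M" and N: "dist01 N" and mm: "\<And>n. mom M n = mom N n"
    and f: "continuous_on {0..1} f"
  shows "(LINT x:{0..1}|M. f x) = (LINT x:{0..1}|N. f x)"
proof (rule eq_by_eps)
  fix e :: real assume e: "e > 0"
  obtain g where g: "real_polynomial_function g" "\<And>x. x \<in> {0..1} \<Longrightarrow> \<bar>f x - g x\<bar> < e"
    using Stone_Weierstrass_real_polynomial_function[OF compact_Icc f e] by blast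
  obtain a N' where gs: "g = (\<lambda>x. \<Sum>i\<le>N'. a i * x ^ i)"
    using g(1) real_polynomial_function_iff_sum by blast
  have gc: "continuous_on {0..1} g" unfolding gs by (intro continuous_intros)
  have "(LINT x:{0..1}|M. g x) = (\<Sum>i\<le>N'. a i * (LINT x:{0..1}|M. x ^ i))"
    unfolding gs by (rule int_sum[OF M cont_pow])
  moreover have "(LINT x:{0..1}|N. g x) = (\<Sum>i\<le>N'. a i * (LINT x:{0..1}|N. x ^ i))"
    unfolding gs by (rule int_sum[OF N cont_pow])
  ultimately have eg: "(LINT x:{0..1}|M. g x) = (LINT x:{0..1}|N. g x)"
    using mm unfolding mom_def by simp
  have fgb: "\<forall>y\<in>{0..1}. \<bar>1 * f y + (-1) * g y\<bar> \<le> e" using g(2) by (simp add: less_imp_le)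
  have fgc: "continuous_on {0..1} (\<lambda>y. 1 * f y + (-1) * g y)" using f gc by (intro continuous_intros)
  have d1: "(LINT x:{0..1}|M. 1 * f x + (-1) * g x) = (LINT x:{0..1}|M. f x) - (LINT x:{0..1}|M. g x)"
    using int_lin2[OF M f gc, of 1 "-1"] by simp
  have d2: "(LINT x:{0..1}|N. 1 * f x + (-1) * g x) = (LINT x:{0..1}|N. f x) - (LINT x:{0..1}|N. g x)"
    using int_lin2[OF N f gc, of 1 "-1"] by simp
  have b1: "\<bar>LINT x:{0..1}|M. 1 * f x + (-1) * g x\<bar> \<le> e" by (rule int_bound01[OF M fgc fgb])
  have b2: "\<bar>LINT x:{0..1}|N. 1 * f x + (-1) * g x\<bar> \<le> e" by (rule int_bound01[OF N fgc fgb])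
  show "\<bar>(LINT x:{0..1}|M. f x) - (LINT x:{0..1}|N. f x)\<bar> \<le> 2 * e"
    using b1 b2 d1 d2 eg by linarith
qed

lemma dist01_AE: "dist01 M \<Longrightarrow> AE x in M. x \<in> {0..1::real}"
proof -
  assume M: "dist01 M"
  have "measure M {0..1::real} = 1" using M unfolding dist01_def measure_def by simp
  then show ?thesis using prob_space.AE_prob_1[OF dist01_prob[OF M]] by blast
qed

lemma full_set:
  fixes f :: "real \<Rightarrow> real"
  assumes M: "dist01 M" and f: "f \<in> borel_measurable borel"
  shows "integral\<^sup>L M f = (LINT x:{0..1}|M. f x)"
proof -
  have sM: "sets M = sets borel" using M unfolding dist01_def by blast
  have f': "f \<in> borel_measurable M" using f measurable_cong_sets[OF sM refl] by blast
  have g': "(\<lambda>x. indicator {0..1::real} x *\<^sub>R f x) \<in> borel_measurable M"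
    using f' by (intro borel_measurable_scaleR borel_measurable_indicator) (auto simp: sM)
  show ?thesis unfolding set_lebesgue_integral_def
    by (rule integral_cong_AE[OF f' g']) (use dist01_AE[OF M] in \<open>auto simp: indicator_def\<close>)
qed

lemma dist01_rd: "dist01 M \<Longrightarrow> real_distribution M"
proof -
  assume M: "dist01 M"
  have p: "prob_space M" using M[unfolded dist01_def, THEN conjunct1] .
  have s: "sets M = sets borel" using M[unfolded dist01_def, THEN conjunct2, THEN conjunct1] .
  show ?thesis by (rule real_distribution.intro[OF p real_distribution_axioms.intro[OF s]])
qed

lemma char_Re: 
  assumes M: "dist01 M"
  shows "Re (char M t) = integral\<^sup>L M (\<lambda>x. cos (t * x))"
    and "Im (char M t) = integral\<^sup>L M (\<lambda>x. sin (t * x))"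
proof -
  interpret real_distribution M using dist01_rd[OF M] .
  have i: "integrable M (\<lambda>x. iexp (t * x))"
    by (rule integrable_iexp) auto
  show "Re (char M t) = integral\<^sup>L M (\<lambda>x. cos (t * x))"
    unfolding char_def using integral_Re[OF i] by (simp add: Re_exp)
  show "Im (char M t) = integral\<^sup>L M (\<lambda>x. sin (t * x))"
    unfolding char_def using integral_Im[OF i] by (simp add: Im_exp)
qed

lemma dist01_eq:
  assumes M: "dist01 M" and N: "dist01 N" and mm: "\<And>n. mom M n = mom N n"
  shows "M = N"
proof (rule Levy_uniqueness[OF dist01_rd[OF M] dist01_rd[OF N]])
  show "char M = char N"
  proof
    fix t :: real
    have cc: "continuous_on {0..1} (\<lambda>x. cos (t * x))" "continuous_on {0..1} (\<lambda>x. sin (t * x))"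
      by (intro continuous_intros)+
    have mc: "(\<lambda>x. cos (t * x)) \<in> borel_measurable borel" "(\<lambda>x. sin (t * x)) \<in> borel_measurable borel"
      by (intro borel_measurable_continuous_onI continuous_intros)+
    show "char M t = char N t"
    proof (rule complex_eqI)
      show "Re (char M t) = Re (char N t)"
        unfolding char_Re[OF M] char_Re[OF N] full_set[OF M mc(1)] full_set[OF N mc(1)]
        by (rule dist01_cont_eq[OF M N mm cc(1)])
      show "Im (char M t) = Im (char N t)"
        unfolding char_Re[OF M] char_Re[OF N] full_set[OF M mc(2)] full_set[OF N mc(2)]
        by (rule dist01_cont_eq[OF M N mm cc(2)])
    qed
  qed
qed


fun betaJ :: "real \<Rightarrow> nat \<Rightarrow> real" where
  "betaJ \<theta> 0 = 1"
| "betaJ \<theta> (Suc m) = real (Suc m) / (real (Suc m) + \<theta>) * betaJ \<theta> m"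

lemma beta_ftc:
  fixes \<theta> :: real
  assumes th: "\<theta> > 0"
  shows "((\<lambda>z. (1 + real n / \<theta>) * (\<theta> * (1 - z) powr (\<theta> - 1) * z ^ n) -
            (real n / \<theta>) * (\<theta> * (1 - z) powr (\<theta> - 1) * z ^ (n - 1))) has_integral (0::real) ^ n) {0..1}"
proof -
  define F where "F z = - (z ^ n * (1 - z) powr \<theta>)" for z :: real
  have cF: "continuous_on {0..1} F" unfolding F_def
    by (intro continuous_intros continuous_on_powr') (use th in auto)
  have dF: "(F has_vector_derivative
      ((1 + real n / \<theta>) * (\<theta> * (1 - x) powr (\<theta> - 1) * x ^ n) -
            (real n / \<theta>) * (\<theta> * (1 - x) powr (\<theta> - 1) * x ^ (n - 1)))) (at x)"
    if x: "x \<in> {0<..<1}" for x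
  proof -
    have x1: "1 - x > 0" using x by auto
    have p: "((\<lambda>z. (1 - z) powr \<theta>) has_real_derivative \<theta> * (1 - x) powr (\<theta> - of_nat 1) * (- 1)) (at x)"
      by (rule DERIV_fun_powr) (use x in \<open>auto intro!: derivative_eq_intros\<close>)
    have d: "(F has_real_derivative - (real n * x ^ (n - Suc 0) * (1 - x) powr \<theta> +
        (\<theta> * (1 - x) powr (\<theta> - of_nat 1) * (- 1)) * x ^ n)) (at x)"
      unfolding F_def by (rule DERIV_minus[OF DERIV_mult[OF DERIV_pow p]])
    have pw: "(1 - x) powr \<theta> = (1 - x) * (1 - x) powr (\<theta> - 1)"
      using x1 by (simp add: powr_diff)
    have eq: "- (real n * x ^ (n - Suc 0) * (1 - x) powr \<theta> +
        (\<theta> * (1 - x) powr (\<theta> - of_nat 1) * (- 1)) * x ^ n) =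
        (1 + real n / \<theta>) * (\<theta> * (1 - x) powr (\<theta> - 1) * x ^ n) -
            (real n / \<theta>) * (\<theta> * (1 - x) powr (\<theta> - 1) * x ^ (n - 1))"
    proof (cases n)
      case 0
      then show ?thesis by simp
    next
      case (Suc k)
      then show ?thesis unfolding pw using th by (simp add: field_simps)
    qed
    show ?thesis using d unfolding eq has_real_derivative_iff_has_vector_derivative .
  qed
  have "((\<lambda>z. (1 + real n / \<theta>) * (\<theta> * (1 - z) powr (\<theta> - 1) * z ^ n) -
            (real n / \<theta>) * (\<theta> * (1 - z) powr (\<theta> - 1) * z ^ (n - 1))) has_integral F 1 - F 0) {0..1}"
    by (rule fundamental_theorem_of_calculus_interior[OF _ cF dF]) auto
  moreover have "F 1 - F 0 = 0 ^ n" unfolding F_def using th by (cases n) auto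
  ultimately show ?thesis by simp
qed

lemma beta_hk:
  fixes \<theta> :: real
  assumes th: "\<theta> > 0"
  shows "((\<lambda>z. \<theta> * (1 - z) powr (\<theta> - 1) * z ^ n) has_integral betaJ \<theta> n) {0..1}"
proof (induction n)
  case 0
  show ?case using beta_ftc[OF th, of 0] by simp
next
  case (Suc m)
  define d where "d z = \<theta> * (1 - z) powr (\<theta> - 1)" for z :: real
  have A: "((\<lambda>z. (1 + real (Suc m) / \<theta>) * (d z * z ^ Suc m) - (real (Suc m) / \<theta>) * (d z * z ^ m))
       has_integral 0) {0..1}"
    using beta_ftc[OF th, of "Suc m"] unfolding d_def by simp
  have B: "((\<lambda>z. (real (Suc m) / \<theta>) * (d z * z ^ m)) has_integral (real (Suc m) / \<theta>) * betaJ \<theta> m) {0..1}"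
    by (rule has_integral_mult_right) (use Suc.IH in \<open>simp add: d_def\<close>)
  have C: "((\<lambda>z. (1 / (1 + real (Suc m) / \<theta>)) * (((1 + real (Suc m) / \<theta>) * (d z * z ^ Suc m) -
       (real (Suc m) / \<theta>) * (d z * z ^ m)) + (real (Suc m) / \<theta>) * (d z * z ^ m)))
     has_integral (1 / (1 + real (Suc m) / \<theta>)) * (0 + (real (Suc m) / \<theta>) * betaJ \<theta> m)) {0..1}"
    by (intro has_integral_mult_right has_integral_add A B)
  have "real (Suc m) / \<theta> > 0" using th by simp
  then have pos: "1 + real (Suc m) / \<theta> \<noteq> 0" by linarith
  have fe: "(\<lambda>z. (1 / (1 + real (Suc m) / \<theta>)) * (((1 + real (Suc m) / \<theta>) * (d z * z ^ Suc m) -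
       (real (Suc m) / \<theta>) * (d z * z ^ m)) + (real (Suc m) / \<theta>) * (d z * z ^ m))) =
     (\<lambda>z. \<theta> * (1 - z) powr (\<theta> - 1) * z ^ Suc m)"
    using pos by (auto simp: d_def)
  have ve: "(1 / (1 + real (Suc m) / \<theta>)) * (0 + (real (Suc m) / \<theta>) * betaJ \<theta> m) = betaJ \<theta> (Suc m)"
  proof -
    have a: "real (Suc m) + \<theta> > 0" using th by simp
    have "(1 + real (Suc m) / \<theta>) = (real (Suc m) + \<theta>) / \<theta>" using th by (simp add: field_simps)
    moreover have "\<theta> * \<theta> + \<theta> * real (Suc m) > 0"
      using th by (intro add_pos_nonneg) auto
    ultimately show ?thesis using th a by (simp add: field_simps del: of_nat_Suc)
  qed
  show ?case using C unfolding fe ve .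
qed


lemma lborel_from_hk:
  fixes f :: "real \<Rightarrow> real"
  assumes fm: "f \<in> borel_measurable borel" and nn: "\<And>x. x \<in> {0..1} \<Longrightarrow> f x \<ge> 0"
    and I: "(f has_integral I) {0..1}"
  shows "integrable lborel (\<lambda>x. indicator {0..1} x * f x)"
    and "integral\<^sup>L lborel (\<lambda>x. indicator {0..1} x * f x) = I"
proof -
  define g where "g x = indicator {0..1::real} x * f x" for x
  have g_eq: "(\<lambda>x. if x \<in> {0..1} then f x else 0) = g" by (rule ext) (simp add: g_def indicator_def)
  have gI: "(g has_integral I) UNIV" using I has_integral_restrict_UNIV[of "{0..1}" f I] g_eq by simp
  have gm: "g \<in> borel_measurable borel" unfolding g_def using fm by measurable
  have gnn: "\<And>x. 0 \<le> g x" using nn by (simp add: g_def indicator_def)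
  have nI: "integral\<^sup>N lborel g = I" by (rule nn_integral_has_integral_lborel[OF gm gnn gI])
  have I0: "I \<ge> 0" using gI by (rule has_integral_nonneg) (simp add: gnn)
  have gml: "g \<in> borel_measurable lborel" using gm by simp
  show "integrable lborel (\<lambda>x. indicator {0..1} x * f x)"
    unfolding g_def[symmetric]
    by (rule integrableI_nonneg[OF gml]) (use gnn nI in auto)
  have "integral\<^sup>L lborel g = enn2real (\<integral>\<^sup>+ x. ennreal (g x) \<partial>lborel)"
    by (rule integral_eq_nn_integral[OF gml]) (use gnn in auto)
  also have "\<dots> = I" using nI I0 by simp
  finally show "integral\<^sup>L lborel (\<lambda>x. indicator {0..1} x * f x) = I" unfolding g_def[symmetric] .
qed

lemma betaJ_rec: "n \<ge> 1 \<Longrightarrow> \<theta> \<ge> 0 \<Longrightarrow> (real n + \<theta>) * betaJ \<theta> n = real n * betaJ \<theta> (n - 1)"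
proof -
  assume n: "n \<ge> 1" and th: "\<theta> \<ge> 0"
  obtain m where m: "n = Suc m" using n by (cases n) auto
  have "real (Suc m) + \<theta> > 0" using th by simp
  then show ?thesis using m by simp
qed

lemma d_meas: "(\<lambda>z::real. \<theta> * (1 - z) powr (\<theta> - 1)) \<in> borel_measurable borel"
  by measurable

lemma beta_pos:
  fixes \<theta> :: real
  assumes th: "\<theta> > 0"
  shows "dist01 (beta1 \<theta>)" "mom (beta1 \<theta>) n = betaJ \<theta> n"
proof -
  define gi where "gi z = indicator {0..1} z * (\<theta> * (1 - z) powr (\<theta> - 1))" for z :: real
  have B: "beta1 \<theta> = density lborel (\<lambda>z. ennreal (gi z))"
    unfolding beta1_def gi_def using th by simp
  have gim: "gi \<in> borel_measurable borel" unfolding gi_def using d_meas by measurable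
  have ginn: "\<And>z. gi z \<ge> 0" unfolding gi_def indicator_def using th by simp
  have h0: "((\<lambda>z. \<theta> * (1 - z) powr (\<theta> - 1)) has_integral 1) {0..1}"
    using beta_hk[OF th, of 0] by simp
  have gint: "integrable lborel gi" and gval: "integral\<^sup>L lborel gi = 1"
    using lborel_from_hk[OF d_meas _ h0] th unfolding gi_def by auto
  have nn: "(\<integral>\<^sup>+ x. ennreal (gi x) \<partial>lborel) = 1"
    using nn_integral_eq_integral[OF gint] ginn gval by simp
  have e1: "emeasure (beta1 \<theta>) UNIV = 1"
    unfolding B using gim nn by (simp add: emeasure_density)
  have e2: "emeasure (beta1 \<theta>) {0..1} = 1"
  proof -
    have "emeasure (beta1 \<theta>) {0..1} = (\<integral>\<^sup>+ x. ennreal (gi x) * indicator {0..1} x \<partial>lborel)"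
      unfolding B using gim by (simp add: emeasure_density)
    also have "\<dots> = (\<integral>\<^sup>+ x. ennreal (gi x) \<partial>lborel)"
      by (rule nn_integral_cong) (simp add: gi_def indicator_def)
    finally show ?thesis using nn by simp
  qed
  have sp: "space (beta1 \<theta>) = UNIV" unfolding B by simp
  have ps: "prob_space (beta1 \<theta>)" by (rule prob_spaceI) (simp add: sp e1)
  have ss: "sets (beta1 \<theta>) = sets borel" unfolding B by simp
  show "dist01 (beta1 \<theta>)" unfolding dist01_def using ps ss e2 by blast
  have "mom (beta1 \<theta>) n = integral\<^sup>L (density lborel (\<lambda>z. ennreal (gi z))) (\<lambda>x. indicator {0..1} x *\<^sub>R x ^ n)"
    unfolding mom_def B set_lebesgue_integral_def ..
  also have "\<dots> = integral\<^sup>L lborel (\<lambda>x. gi x *\<^sub>R (indicator {0..1} x *\<^sub>R x ^ n))"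
    by (rule integral_density) (use gim ginn in auto)
  also have "\<dots> = integral\<^sup>L lborel (\<lambda>x. indicator {0..1} x * (\<theta> * (1 - x) powr (\<theta> - 1) * x ^ n))"
    by (rule Bochner_Integration.integral_cong) (auto simp: gi_def indicator_def)
  also have "\<dots> = betaJ \<theta> n"
    by (rule lborel_from_hk(2)) (use beta_hk[OF th] th in auto)
  finally show "mom (beta1 \<theta>) n = betaJ \<theta> n" .
qed

lemma beta_zero:
  shows "dist01 (beta1 0)" "mom (beta1 0) n = 1"
proof -
  have B: "beta1 0 = return borel 1" unfolding beta1_def by simp
  show "dist01 (beta1 0)" unfolding dist01_def B
    by (auto intro!: prob_space_return simp: emeasure_return)
  have "mom (beta1 0) n = integral\<^sup>L (return borel 1) (\<lambda>x. indicator {0..1::real} x *\<^sub>R x ^ n)"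
    unfolding mom_def B set_lebesgue_integral_def ..
  also have "\<dots> = indicator {0..1::real} 1 *\<^sub>R 1 ^ n"
    by (rule integral_return) auto
  finally show "mom (beta1 0) n = 1" by simp
qed


theorem mainTheorem9:
  fixes \<theta> :: real and T :: "real \<Rightarrow> (real \<Rightarrow> real) \<Rightarrow> (real \<Rightarrow> real)"
  assumes "\<theta> \<ge> 0"
    and "generated_by_A \<theta> T"
  shows "invariant_dist T (beta1 \<theta>) \<and> (\<forall>M. invariant_dist T M \<longrightarrow> M = beta1 \<theta>)"
proof -
  note th = assms(1) and G = assms(2)
  have bd: "dist01 (beta1 \<theta>)"
  proof (cases "\<theta> = 0")
    case True then show ?thesis using beta_zero(1) by simp
  next
    case False then show ?thesis using beta_pos(1) th by simp
  qed
  have brec: "(real n + \<theta>) * mom (beta1 \<theta>) n = real n * mom (beta1 \<theta>) (n - 1)" if n: "n \<ge> 1" for n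
  proof (cases "\<theta> = 0")
    case True then show ?thesis using beta_zero(2) by simp
  next
    case False
    then have tp: "\<theta> > 0" using th by simp
    show ?thesis using beta_pos(2)[OF tp] betaJ_rec[OF n th] by simp
  qed
  have inv: "invariant_dist T (beta1 \<theta>)"
    unfolding invariant_dist_def using bd inv_cont[OF G bd brec] by blast
  have uniq: "M = beta1 \<theta>" if I: "invariant_dist T M" for M
  proof -
    have dM: "dist01 M" using I unfolding invariant_dist_def by blast
    have "mom M n = mom (beta1 \<theta>) n" for n
      by (rule mom_eq[OF th dM bd rec_of_inv[OF G I] brec])
    then show ?thesis by (rule dist01_eq[OF dM bd])
  qed
  show ?thesis using inv uniq by blast
qed

end
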